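(* Let $\mathrm{sendMsg}:\mathbb{V}\times A\times\mathbb{V}\times A\times B\to(\mathbb{V}\times C)^{*}$ and $\odot:C\times C\to C$. If calls $\mathrm{reduceByKey}(\odot,\cdot)$ (on pair RDDs over $\mathbb{V}\times C$) have deterministic outcomes, then calls $\mathrm{aggregateMessages}(\mathrm{sendMsg},\odot,\mathit{graphRdd})$ have deterministic outcomes.
   Context: Lists are finite; $X^{*}$ denotes lists over $X$; $\mathrm{foldl}(f,b,[x_1,\dots,x_n])=f(\cdots f(f(b,x_1),x_2)\cdots,x_n)$ and $\mathrm{reducel}(f,[x_1,\dots,x_n])=\mathrm{foldl}(f,x_1,[x_2,\dots,x_n])$. An RDD is a list of lists ("partitions"); a pair RDD is an RDD of (key, value) pairs; $\mathrm{filterkey}(k,L)$ lists the values of pairs with key $k$ in $L$ in order. A partitioning of a list $L$ splits $L$ into consecutive pieces and permutes them. $\mathrm{reduceByKey}_{\mathrm{det}}(\odot,[q_1,\dots,q_m])$ returns a pair RDD containing each key $k$ occurring in some $q_i$ once, with value $\mathrm{reducel}(\odot,[c_{i_1},\dots,c_{i_r}])$ where $i_1<\dots<i_r$ are the indices of pieces containing $k$ and $c_i=\mathrm{reducel}(\odot,\mathrm{filterkey}(k,q_i))$; calls $\mathrm{reduceByKey}(\odot,\cdot)$ have deterministic outcomes if the value at every key $k$ occurring in $L$ of $\mathrm{reduceByKey}_{\mathrm{det}}(\odot,P(L))$ equals $\mathrm{reducel}(\odot,\mathrm{filterkey}(k,L))$ for all lists $L$ of pairs and partitionings $P$. Let $\mathbb{V}$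 be the set of vertex identifiers. A graph RDD with vertex attributes in $A$ and edge attributes in $B$ consists of a vertex RDD (an RDD over $\mathbb{V}\times A$ in which each vertex identifier appears at most once) and an edge RDD (an RDD over $\mathbb{V}\times\mathbb{V}\times B$ of triples (source, destination, attribute), multi-edges allowed), such that every endpoint of an edge appears in the vertex RDD; two graph RDDs represent the same graph if they have the same vertex pairs and the same multiset of edge triples, possibly partitioned and ordered differently. $\mathrm{aggregateMessages}(\mathrm{sendMsg},\odot,\mathit{graphRdd})$: replace each edge partition $[e_1,\dots,e_s]$ by the concatenation of the lists $\mathrm{sendMsg}(u,a_u,v,a_v,b)$ for $e_j=(u,v,b)$, where $a_u,a_v$ are the attributes of $u,v$ in the vertex RDD, obtaining a pair RDD over $\mathbb{V}\times C$, and apply $\mathrm{reduceByKey}(\odot,\cdot)$ to it (this last step being executed in a possibly non-deterministic order, as modeled by reduceByKey). Calls $\mathrm{aggregateMessages}(\mathrm{sendMsg},\odot,\mathit{graphRdd})$ have deterministic outcomes if for any two graph RDDs $g_1,g_2$ representing the same graph and every vertex identifier $v$, the value associated with $v$ in $\mathrm{aggregateMessages}(\mathrm{sendMsg},\odot,g_1)$ equals that in $\mathrm{aggregateMessages}(\mathrm{sendMsg},\odot,g_2)$. *)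

theory Defs
  imports Main "HOL-Library.Multiset"
begin

text \<open>An RDD over X is a list of lists (partitions) of X.\<close>
type_synonym 'x rdd = "'x list list"

definition reducel :: "('c \<Rightarrow> 'c \<Rightarrow> 'c) \<Rightarrow> 'c list \<Rightarrow> 'c" where
  "reducel f xs = foldl f (hd xs) (tl xs)"

definition filterkey :: "'k \<Rightarrow> ('k \<times> 'c) list \<Rightarrow> 'c list" where
  "filterkey k L = map snd (filter (\<lambda>p. fst p = k) L)"

definition is_partitioning :: "'x rdd \<Rightarrow> 'x list \<Rightarrow> bool" where
  "is_partitioning P L \<longleftrightarrow> (\<exists>ps. concat ps = L \<and> mset P = mset ps)"

text \<open>Deterministic reduceByKey; the resulting pair RDD (each key once) is
  represented by the partial map from keys to their values.\<close>
definition reduceByKey_det :: "('c \<Rightarrow> 'c \<Rightarrow> 'c) \<Rightarrow> ('k \<times> 'c) rdd \<Rightarrow> 'k \<Rightarrow> 'c option" where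
  "reduceByKey_det f qs k =
     (if k \<in> fst ` set (concat qs)
      then Some (reducel f (map (\<lambda>q. reducel f (filterkey k q))
                               (filter (\<lambda>q. k \<in> fst ` set q) qs)))
      else None)"

definition reduceByKey_deterministic :: "('c \<Rightarrow> 'c \<Rightarrow> 'c) \<Rightarrow> 'k itself \<Rightarrow> bool" where
  "reduceByKey_deterministic f (_ :: 'k itself) \<longleftrightarrow>
     (\<forall>(L :: ('k \<times> 'c) list) P. is_partitioning P L \<longrightarrow>
        (\<forall>k \<in> fst ` set L. reduceByKey_det f P k = Some (reducel f (filterkey k L))))"

definition reduceByKey_outcomes :: "('c \<Rightarrow> 'c \<Rightarrow> 'c) \<Rightarrow> ('k \<times> 'c) rdd \<Rightarrow> ('k \<Rightarrow> 'c option) set" where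
  "reduceByKey_outcomes f R = {reduceByKey_det f P | P. is_partitioning P (concat R)}"

type_synonym ('v, 'a, 'b) graph_rdd = "('v \<times> 'a) rdd \<times> ('v \<times> 'v \<times> 'b) rdd"

definition graph_rdd :: "('v, 'a, 'b) graph_rdd \<Rightarrow> bool" where
  "graph_rdd g \<longleftrightarrow> distinct (map fst (concat (fst g))) \<and>
     (\<forall>(u, v, b) \<in> set (concat (snd g)).
        u \<in> fst ` set (concat (fst g)) \<and> v \<in> fst ` set (concat (fst g)))"

definition same_graph :: "('v, 'a, 'b) graph_rdd \<Rightarrow> ('v, 'a, 'b) graph_rdd \<Rightarrow> bool" where
  "same_graph g1 g2 \<longleftrightarrow> set (concat (fst g1)) = set (concat (fst g2)) \<and>
     mset (concat (snd g1)) = mset (concat (snd g2))"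

definition vattr :: "('v, 'a, 'b) graph_rdd \<Rightarrow> 'v \<Rightarrow> 'a" where
  "vattr g u = the (map_of (concat (fst g)) u)"

definition message_rdd ::
  "('v \<Rightarrow> 'a \<Rightarrow> 'v \<Rightarrow> 'a \<Rightarrow> 'b \<Rightarrow> ('v \<times> 'c) list) \<Rightarrow> ('v, 'a, 'b) graph_rdd \<Rightarrow> ('v \<times> 'c) rdd" where
  "message_rdd sendMsg g =
     map (\<lambda>part. concat (map (\<lambda>(u, v, b). sendMsg u (vattr g u) v (vattr g v) b) part)) (snd g)"

definition aggregateMessages_outcomes ::
  "('v \<Rightarrow> 'a \<Rightarrow> 'v \<Rightarrow> 'a \<Rightarrow> 'b \<Rightarrow> ('v \<times> 'c) list) \<Rightarrow> ('c \<Rightarrow> 'c \<Rightarrow> 'c)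
   \<Rightarrow> ('v, 'a, 'b) graph_rdd \<Rightarrow> ('v \<Rightarrow> 'c option) set" where
  "aggregateMessages_outcomes sendMsg f g = reduceByKey_outcomes f (message_rdd sendMsg g)"

definition aggregateMessages_deterministic ::
  "('v \<Rightarrow> 'a \<Rightarrow> 'v \<Rightarrow> 'a \<Rightarrow> 'b \<Rightarrow> ('v \<times> 'c) list) \<Rightarrow> ('c \<Rightarrow> 'c \<Rightarrow> 'c) \<Rightarrow> bool" where
  "aggregateMessages_deterministic sendMsg f \<longleftrightarrow>
     (\<forall>g1 g2. graph_rdd g1 \<longrightarrow> graph_rdd g2 \<longrightarrow> same_graph g1 g2 \<longrightarrow>
        (\<forall>r1 \<in> aggregateMessages_outcomes sendMsg f g1.
         \<forall>r2 \<in> aggregateMessages_outcomes sendMsg f g2. \<forall>v. r1 v = r2 v))"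

end

theory Submission
  imports Defs
begin

lemma part_set: "is_partitioning P L \<Longrightarrow> set (concat P) = set L"
  unfolding is_partitioning_def
  by (metis set_concat set_mset_mset)

lemma concat_map_concat: "concat (map (\<lambda>part. concat (map h part)) xss) = concat (map h (concat xss))"
  by (induction xss) auto

lemma concat_msg:
  "concat (message_rdd sendMsg g) =
   concat (map (\<lambda>(u, v, b). sendMsg u (vattr g u) v (vattr g v) b) (concat (snd g)))"
  unfolding message_rdd_def by (rule concat_map_concat)

lemma vattr_eq:
  assumes "graph_rdd g1" "graph_rdd g2" "same_graph g1 g2"
  shows "vattr g1 = vattr g2"
proof -
  have "map_of (concat (fst g1)) = map_of (concat (fst g2))"
    using assms map_of_inject_set unfolding graph_rdd_def same_graph_def by blast
  thus ?thesis unfolding vattr_def by (simp add: fun_eq_iff)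
qed

lemma perm_reduce:
  assumes det: "reduceByKey_deterministic f TYPE('k)"
    and ms: "mset qs1 = mset (qs2 :: ('k \<times> 'c) list list)"
    and k: "k \<in> fst ` set (concat qs1)"
  shows "reducel f (filterkey k (concat qs1)) = reducel f (filterkey k (concat qs2))"
proof -
  have s: "set (concat qs1) = set (concat qs2)"
    using ms by (metis set_concat set_mset_mset)
  have p1: "is_partitioning qs2 (concat qs1)"
    unfolding is_partitioning_def using ms by (intro exI[of _ qs1]) simp
  have p2: "is_partitioning qs2 (concat qs2)"
    unfolding is_partitioning_def by blast
  have "reduceByKey_det f qs2 k = Some (reducel f (filterkey k (concat qs1)))"
    using det p1 k unfolding reduceByKey_deterministic_def by blast
  moreover have "reduceByKey_det f qs2 k = Some (reducel f (filterkey k (concat qs2)))"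
    using det p2 k s unfolding reduceByKey_deterministic_def by blast
  ultimately show ?thesis by simp
qed

theorem proposition5:
  fixes sendMsg :: "'v \<Rightarrow> 'a \<Rightarrow> 'v \<Rightarrow> 'a \<Rightarrow> 'b \<Rightarrow> ('v \<times> 'c) list"
    and f :: "'c \<Rightarrow> 'c \<Rightarrow> 'c"
  assumes "reduceByKey_deterministic f TYPE('v)"
  shows "aggregateMessages_deterministic sendMsg f"
  unfolding aggregateMessages_deterministic_def
proof (intro allI impI ballI)
  fix g1 g2 :: "('v, 'a, 'b) graph_rdd" and r1 r2 v
  assume g: "graph_rdd g1" "graph_rdd g2" "same_graph g1 g2"
    and r1: "r1 \<in> aggregateMessages_outcomes sendMsg f g1"
    and r2: "r2 \<in> aggregateMessages_outcomes sendMsg f g2"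
  define m where "m = (\<lambda>(u, v, b). sendMsg u (vattr g1 u) v (vattr g1 v) b)"
  have va: "vattr g1 = vattr g2" using vattr_eq g by blast
  define qs1 where "qs1 = map m (concat (snd g1))"
  define qs2 where "qs2 = map m (concat (snd g2))"
  have L1: "concat (message_rdd sendMsg g1) = concat qs1"
    unfolding qs1_def m_def concat_msg ..
  have L2: "concat (message_rdd sendMsg g2) = concat qs2"
    unfolding qs2_def m_def concat_msg va ..
  have ms: "mset qs1 = mset qs2"
    using g(3) unfolding qs1_def qs2_def same_graph_def by simp
  have s: "set (concat qs1) = set (concat qs2)"
    using ms by (metis set_concat set_mset_mset)
  obtain P1 where P1: "r1 = reduceByKey_det f P1" "is_partitioning P1 (concat qs1)"
    using r1 L1 unfolding aggregateMessages_outcomes_def reduceByKey_outcomes_def by auto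
  obtain P2 where P2: "r2 = reduceByKey_det f P2" "is_partitioning P2 (concat qs2)"
    using r2 L2 unfolding aggregateMessages_outcomes_def reduceByKey_outcomes_def by auto
  show "r1 v = r2 v"
  proof (cases "v \<in> fst ` set (concat qs1)")
    case True
    have "r1 v = Some (reducel f (filterkey v (concat qs1)))"
      using assms P1 True unfolding reduceByKey_deterministic_def by blast
    moreover have "r2 v = Some (reducel f (filterkey v (concat qs2)))"
      using assms P2 True s unfolding reduceByKey_deterministic_def by blast
    ultimately show ?thesis using perm_reduce[OF assms ms True] by simp
  next
    case False
    then show ?thesis using P1 P2 part_set[OF P1(2)] part_set[OF P2(2)] s
      unfolding reduceByKey_det_def by simp
  qed
qed

end
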